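(* Let $H$ be a complex reductive group, let $V$ be a finite-dimensional $H$-module and let $v\in V$. The following are equivalent: (1) the span of $Hv$ is $V$; (2) there is no nontrivial one-parameter subgroup of $S:=\operatorname{GL}(V)^H$ which fixes $v$; (3) $v$ is generic.
   Context: Let $V=\bigoplus_{i=1}^k n_iV_i$ be the isotypic decomposition, $V_i$ pairwise non-isomorphic irreducible $H$-modules. Then $\operatorname{GL}(V)^H$ (the $H$-equivariant invertible linear maps) is $\operatorname{GL}(n_1)\times\dots\times\operatorname{GL}(n_k)$. Write $v=(v_{ij})$ with $v_{ij}$ in the $j$th copy of $V_i$ (identified with $V_i$), $j=1,\dots,n_i$. Let $U_i\subset V_i$ be the span of $v_{i1},\dots,v_{in_i}$. The vector $v$ is called generic if $\dim U_i=n_i$ for all $i$. *)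

theory Defs
  imports "HOL-Analysis.Analysis" "HOL-Algebra.Group"
begin

text \<open>V is modelled as complex^'n (a finite-dimensional complex vector space of dimension
CARD('n)); linear endomorphisms are matrices complex^'n^'n; complex-linear notions
(span, subspace, dim) are those of the interpretation vec (scalar multiplication *s).\<close>

definition representation :: "('g, 'b) monoid_scheme \<Rightarrow> ('g \<Rightarrow> complex^'n^'n) \<Rightarrow> bool" where
  "representation G \<rho> \<longleftrightarrow> group G \<and>
     (\<forall>g\<in>carrier G. invertible (\<rho> g)) \<and>
     \<rho> \<one>\<^bsub>G\<^esub> = mat 1 \<and>
     (\<forall>g\<in>carrier G. \<forall>h\<in>carrier G. \<rho> (g \<otimes>\<^bsub>G\<^esub> h) = \<rho> g ** \<rho> h)"

definition invariant_subspace :: "('g, 'b) monoid_scheme \<Rightarrow> ('g \<Rightarrow> complex^'n^'n) \<Rightarrow> (complex^'n) set \<Rightarrow> bool" where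
  "invariant_subspace G \<rho> W \<longleftrightarrow> vec.subspace W \<and> (\<forall>g\<in>carrier G. \<forall>w\<in>W. \<rho> g *v w \<in> W)"

text \<open>Complete reducibility of V (every submodule has an invariant complement); this is the
property of modules of complex reductive groups that stands in for reductivity.\<close>
definition completely_reducible :: "('g, 'b) monoid_scheme \<Rightarrow> ('g \<Rightarrow> complex^'n^'n) \<Rightarrow> bool" where
  "completely_reducible G \<rho> \<longleftrightarrow>
     (\<forall>W. invariant_subspace G \<rho> W \<longrightarrow>
        (\<exists>W'. invariant_subspace G \<rho> W' \<and> W \<inter> W' = {0} \<and> {w + w' | w w'. w \<in> W \<and> w' \<in> W'} = UNIV))"

definition irreducible_submodule :: "('g, 'b) monoid_scheme \<Rightarrow> ('g \<Rightarrow> complex^'n^'n) \<Rightarrow> (complex^'n) set \<Rightarrow> bool" where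
  "irreducible_submodule G \<rho> W \<longleftrightarrow> invariant_subspace G \<rho> W \<and> W \<noteq> {0} \<and>
     (\<forall>W'. invariant_subspace G \<rho> W' \<and> W' \<subseteq> W \<longrightarrow> W' = {0} \<or> W' = W)"

definition module_iso :: "('g, 'b) monoid_scheme \<Rightarrow> ('g \<Rightarrow> complex^'n^'n) \<Rightarrow> (complex^'n \<Rightarrow> complex^'n) \<Rightarrow> (complex^'n) set \<Rightarrow> (complex^'n) set \<Rightarrow> bool" where
  "module_iso G \<rho> f W1 W2 \<longleftrightarrow> bij_betw f W1 W2 \<and>
     (\<forall>x\<in>W1. \<forall>y\<in>W1. f (x + y) = f x + f y) \<and>
     (\<forall>c. \<forall>x\<in>W1. f (c *s x) = c *s f x) \<and>
     (\<forall>g\<in>carrier G. \<forall>x\<in>W1. f (\<rho> g *v x) = \<rho> g *v f x)"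

text \<open>An isotypic decomposition V = \<Oplus>_{i<k} n_i V_i, realised inside V: W i j (i<k, j<n i) is the
j-th copy of the i-th irreducible type, V_i is identified with the copy W i 0, and
\<phi> i j : W i 0 \<rightarrow> W i j is the chosen identification of the j-th copy with V_i.\<close>
definition isotypic_decomposition ::
  "('g, 'b) monoid_scheme \<Rightarrow> ('g \<Rightarrow> complex^'n^'n) \<Rightarrow> nat \<Rightarrow> (nat \<Rightarrow> nat) \<Rightarrow>
   (nat \<Rightarrow> nat \<Rightarrow> (complex^'n) set) \<Rightarrow> (nat \<Rightarrow> nat \<Rightarrow> complex^'n \<Rightarrow> complex^'n) \<Rightarrow> bool" where
  "isotypic_decomposition G \<rho> k n W \<phi> \<longleftrightarrow>
     (\<forall>i<k. 0 < n i) \<and>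
     (\<forall>i<k. \<forall>j<n i. irreducible_submodule G \<rho> (W i j)) \<and>
     (\<forall>i<k. \<forall>j<n i. module_iso G \<rho> (\<phi> i j) (W i 0) (W i j)) \<and>
     (\<forall>i<k. \<forall>i'<k. i \<noteq> i' \<longrightarrow> \<not> (\<exists>f. module_iso G \<rho> f (W i 0) (W i' 0))) \<and>
     (\<forall>x. \<exists>!c. (\<forall>i j. (i < k \<and> j < n i \<longrightarrow> c i j \<in> W i j) \<and> (\<not> (i < k \<and> j < n i) \<longrightarrow> c i j = 0)) \<and>
              x = (\<Sum>(i,j)\<in>Sigma {..<k} (\<lambda>i. {..<n i}). c i j))"

text \<open>v is generic w.r.t. the decomposition: writing v = \<Sum> v'_{ij} with v'_{ij} in the j-th copy
and v_{ij} = \<phi> i j ^{-1} v'_{ij} in V_i, the span U_i of v_{i0},...,v_{i,n_i-1} has dimension n_i.\<close>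
definition generic ::
  "nat \<Rightarrow> (nat \<Rightarrow> nat) \<Rightarrow> (nat \<Rightarrow> nat \<Rightarrow> (complex^'n) set) \<Rightarrow> (nat \<Rightarrow> nat \<Rightarrow> complex^'n \<Rightarrow> complex^'n) \<Rightarrow>
   complex^'n \<Rightarrow> bool" where
  "generic k n W \<phi> v \<longleftrightarrow>
     (\<exists>c. (\<forall>i<k. \<forall>j<n i. c i j \<in> W i j) \<and>
          v = (\<Sum>(i,j)\<in>Sigma {..<k} (\<lambda>i. {..<n i}). c i j) \<and>
          (\<forall>i<k. vec.dim (vec.span ((\<lambda>j. inv_into (W i 0) (\<phi> i j) (c i j)) ` {..<n i})) = n i))"

text \<open>Regular functions on C^*: Laurent polynomials.\<close>
definition laurent_poly_fun :: "(complex \<Rightarrow> complex) \<Rightarrow> bool" where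
  "laurent_poly_fun f \<longleftrightarrow> (\<exists>a :: int \<Rightarrow> complex. \<exists>N :: int.
      \<forall>t. t \<noteq> 0 \<longrightarrow> f t = (\<Sum>m\<in>{-N..N}. a m * t powi m))"

text \<open>One-parameter subgroup of GL(V): a morphism of algebraic groups C^* \<rightarrow> GL(V)
(only its values on nonzero t matter).\<close>
definition one_param_subgroup :: "(complex \<Rightarrow> complex^'n^'n) \<Rightarrow> bool" where
  "one_param_subgroup L \<longleftrightarrow>
     (\<forall>t. t \<noteq> 0 \<longrightarrow> invertible (L t)) \<and>
     (\<forall>s t. s \<noteq> 0 \<longrightarrow> t \<noteq> 0 \<longrightarrow> L (s * t) = L s ** L t) \<and>
     (\<forall>a b. laurent_poly_fun (\<lambda>t. L t $ a $ b))"

end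

theory Submission
  imports Defs "HOL-Computational_Algebra.Polynomial" "HOL-Computational_Algebra.Fundamental_Theorem_Algebra"
begin

definition lin_on :: "(complex^'n) set \<Rightarrow> (complex^'n \<Rightarrow> complex^'m) \<Rightarrow> bool" where
  "lin_on S f \<longleftrightarrow> (\<forall>x\<in>S. \<forall>y\<in>S. f (x + y) = f x + f y) \<and> (\<forall>c. \<forall>x\<in>S. f (c *s x) = c *s f x)"

lemma lin_on_zero: "lin_on S f \<Longrightarrow> vec.subspace S \<Longrightarrow> f 0 = 0"
  unfolding lin_on_def
  by (metis vec.subspace_0 vector_smult_lzero)

lemma lin_on_sum:
  assumes "lin_on S f" "vec.subspace S" "finite A" "\<forall>i\<in>A. g i \<in> S"
  shows "f (\<Sum>i\<in>A. g i) = (\<Sum>i\<in>A. f (g i))"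
  using assms(3,4)
proof (induction A rule: finite_induct)
  case empty then show ?case using lin_on_zero[OF assms(1,2)] by simp
next
  case (insert a A)
  have "(\<Sum>i\<in>A. g i) \<in> S" using insert assms(2) by (auto intro: vec.subspace_sum)
  then show ?case using insert assms(1) unfolding lin_on_def by simp
qed

lemma fam_dep:
  fixes f :: "nat \<Rightarrow> complex^'n"
  shows "\<exists>a. (\<exists>k\<le>CARD('n). a k \<noteq> 0) \<and> (\<Sum>k\<le>CARD('n). a k *s f k) = 0"
proof (cases "inj_on f {..CARD('n)}")
  case False
  then obtain p q where pq: "p \<le> CARD('n)" "q \<le> CARD('n)" "p \<noteq> q" "f p = f q"
    unfolding inj_on_def by auto
  define a where "a = (\<lambda>k. if k = p then (1::complex) else if k = q then -1 else 0)"
  have "(\<Sum>k\<le>CARD('n). a k *s f k) = (\<Sum>k\<le>CARD('n). (if k = p then f p else 0) + (if k = q then - f q else 0))"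
    by (rule sum.cong) (auto simp: a_def pq)
  also have "\<dots> = 0" using pq by (simp add: sum.distrib)
  finally show ?thesis using pq by (intro exI[of _ a]) (auto simp: a_def)
next
  case True
  let ?T = "f ` {..CARD('n)}"
  have card: "card ?T = Suc CARD('n)" using True by (simp add: card_image)
  have "vec.dependent ?T"
  proof (rule ccontr)
    assume "\<not> vec.dependent ?T"
    then have "card ?T \<le> vec.dim (UNIV :: (complex^'n) set)"
      using vec.independent_bound_general[of ?T] vec.dim_subset[of ?T UNIV] by auto
    then show False using card by (simp add: card_cart_basis)
  qed
  then obtain u where u: "\<exists>v\<in>?T. u v \<noteq> 0" "(\<Sum>v\<in>?T. u v *s v) = 0"
    using vec.dependent_finite[of ?T] by auto
  have "(\<Sum>k\<le>CARD('n). u (f k) *s f k) = (\<Sum>v\<in>?T. u v *s v)"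
    using sum.reindex[OF True, of "\<lambda>v. u v *s v"] by simp
  then show ?thesis using u by (intro exI[of _ "\<lambda>k. u (f k)"]) auto
qed

definition ev :: "(complex^'n \<Rightarrow> complex^'n) \<Rightarrow> complex poly \<Rightarrow> complex^'n \<Rightarrow> complex^'n" where
  "ev h q x = (\<Sum>k\<le>degree q. coeff q k *s (h^^k) x)"

lemma ev_bound: "degree q \<le> M \<Longrightarrow> ev h q x = (\<Sum>k\<le>M. coeff q k *s (h^^k) x)"
  unfolding ev_def
  by (rule sum.mono_neutral_left) (auto simp: coeff_eq_0)

lemma ev_add: "ev h (p + q) x = ev h p x + ev h q x"
proof -
  let ?M = "max (degree p) (degree q)"
  have "ev h (p + q) x = (\<Sum>k\<le>?M. coeff (p+q) k *s (h^^k) x)"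
    by (rule ev_bound) (simp add: degree_add_le)
  also have "\<dots> = (\<Sum>k\<le>?M. coeff p k *s (h^^k) x) + (\<Sum>k\<le>?M. coeff q k *s (h^^k) x)"
    by (simp add: sum.distrib vector_sadd_rdistrib)
  also have "\<dots> = ev h p x + ev h q x"
    using ev_bound[of p ?M h x] ev_bound[of q ?M h x] by simp
  finally show ?thesis .
qed

lemma ev_smult: "ev h (smult c q) x = c *s ev h q x"
proof -
  have "ev h (smult c q) x = (\<Sum>k\<le>degree q. coeff (smult c q) k *s (h^^k) x)"
    by (rule ev_bound) simp
  also have "\<dots> = c *s ev h q x"
    by (simp add: ev_def vec.scale_sum_right vector_smult_assoc)
  finally show ?thesis .
qed

lemma pow_in:
  assumes "\<forall>x\<in>S. h x \<in> S" "x \<in> S" shows "(h^^k) x \<in> S"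
  by (induction k) (use assms in auto)

lemma ev_in:
  assumes "vec.subspace S" "\<forall>x\<in>S. h x \<in> S" "x \<in> S" shows "ev h q x \<in> S"
  unfolding ev_def using assms pow_in[OF assms(2,3)]
  by (intro vec.subspace_sum) (auto intro: vec.subspace_scale)

lemma ev_pCons0:
  assumes S: "vec.subspace S" "\<forall>x\<in>S. h x \<in> S" "x \<in> S" "lin_on S h"
  shows "ev h (pCons 0 q) x = h (ev h q x)"
proof -
  have "ev h (pCons 0 q) x = (\<Sum>k\<le>Suc (degree q). coeff (pCons 0 q) k *s (h^^k) x)"
    by (rule ev_bound) (simp add: degree_pCons_le)
  also have "\<dots> = (\<Sum>k\<le>degree q. coeff q k *s (h^^(Suc k)) x)"
    by (subst sum.atMost_Suc_shift) simp
  also have "\<dots> = (\<Sum>k\<le>degree q. h (coeff q k *s (h^^k) x))"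
    using assms pow_in[OF S(2,3)] unfolding lin_on_def by (intro sum.cong) auto
  also have "\<dots> = h (ev h q x)"
    unfolding ev_def using pow_in[OF S(2,3)] S
    by (subst lin_on_sum[OF S(4,1)]) (auto intro: vec.subspace_scale)
  finally show ?thesis .
qed

lemma ev_lin:
  assumes S: "vec.subspace S" "\<forall>x\<in>S. h x \<in> S" "x \<in> S" "lin_on S h"
  shows "ev h ([:-r, 1:] * q) x = h (ev h q x) - r *s ev h q x"
proof -
  have e: "[:-r, 1:] * q = smult (-r) q + pCons 0 q" by (simp add: mult_pCons_left)
  have "ev h ([:-r, 1:] * q) x = (-r) *s ev h q x + h (ev h q x)"
    by (simp only: e ev_add ev_smult ev_pCons0[OF S])
  then show ?thesis by (simp add: vec_eq_iff)
qed

lemma ev_const: "ev h [:c:] x = c *s x"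
  by (simp add: ev_def)

lemma eigen_aux:
  assumes S: "vec.subspace S" "\<forall>x\<in>S. h x \<in> S" "lin_on S h"
  shows "p \<noteq> 0 \<Longrightarrow> w \<in> S \<Longrightarrow> w \<noteq> 0 \<Longrightarrow> ev h p w = 0 \<Longrightarrow> \<exists>l u. u \<in> S \<and> u \<noteq> 0 \<and> h u = l *s u"
proof (induction "degree p" arbitrary: p w rule: less_induct)
  case less
  show ?case
  proof (cases "degree p = 0")
    case True
    then obtain c where "p = [:c:]" by (meson degree_eq_zeroE)
    then show ?thesis using less.prems by (auto simp: ev_const vector_mul_eq_0)
  next
    case False
    then obtain r where "poly p r = 0" using alg_closed_imp_poly_has_root by blast
    then obtain q where pq: "p = [:-r, 1:] * q" by (meson dvd_def poly_eq_0_iff_dvd)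
    have q0: "q \<noteq> 0" using less.prems pq by auto
    have "degree ([:-r, 1:] * q) = degree q + 1"
      by (subst degree_mult_eq) (use q0 in auto)
    then have dq: "degree q < degree p" using pq by simp
    let ?u = "ev h q w"
    have uS: "?u \<in> S" using ev_in S less.prems by blast
    show ?thesis
    proof (cases "?u = 0")
      case True
      then show ?thesis using less.hyps[OF dq q0] less.prems by blast
    next
      case False
      have "h ?u - r *s ?u = 0" using ev_lin[OF S(1,2) less.prems(2) S(3), of r q] less.prems pq by simp
      then show ?thesis using False uS by (intro exI[of _ r] exI[of _ ?u]) auto
    qed
  qed
qed

lemma eigen_exists:
  fixes h :: "complex^'n \<Rightarrow> complex^'n"
  assumes S: "vec.subspace S" "S \<noteq> {0}" "\<forall>x\<in>S. h x \<in> S" "lin_on S h"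
  shows "\<exists>l u. u \<in> S \<and> u \<noteq> 0 \<and> h u = l *s u"
proof -
  obtain w where w: "w \<in> S" "w \<noteq> 0" using S(1,2) vec.subspace_0 by blast
  obtain a where a: "\<exists>k\<le>CARD('n). a k \<noteq> 0" "(\<Sum>k\<le>CARD('n). a k *s (h^^k) w) = 0"
    using fam_dep[of "\<lambda>k. (h^^k) w"] by blast
  define p where "p = (\<Sum>k\<le>CARD('n). monom (a k) k)"
  have cp: "coeff p k = (if k \<le> CARD('n) then a k else 0)" for k
    unfolding p_def by (simp add: coeff_sum coeff_monom)
  have dp: "degree p \<le> CARD('n)"
    unfolding p_def by (intro degree_sum_le) (auto simp: degree_monom_le order.trans[OF degree_monom_le])
  have p0: "p \<noteq> 0" using a(1) cp by (metis coeff_0)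
  have "ev h p w = 0" using a(2) by (simp add: ev_bound[OF dp] cp)
  then show ?thesis using eigen_aux[OF S(1,3,4) p0 w] by blast
qed


definition eqv :: "('g, 'b) monoid_scheme \<Rightarrow> ('g \<Rightarrow> complex^'n^'n) \<Rightarrow> (complex^'n) set \<Rightarrow> (complex^'n \<Rightarrow> complex^'n) \<Rightarrow> bool" where
  "eqv G \<rho> X f \<longleftrightarrow> (\<forall>g\<in>carrier G. \<forall>x\<in>X. f (\<rho> g *v x) = \<rho> g *v f x)"

lemma lin_on_diff: "lin_on S f \<Longrightarrow> vec.subspace S \<Longrightarrow> x \<in> S \<Longrightarrow> y \<in> S \<Longrightarrow> f (x - y) = f x - f y"
proof -
  assume a: "lin_on S f" "vec.subspace S" "x \<in> S" "y \<in> S"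
  have "x - y = x + (-1) *s y" by (simp add: vec_eq_iff)
  moreover have "(-1) *s y \<in> S" using a vec.subspace_scale by blast
  moreover have "f ((-1) *s y) = (-1) *s f y" using a unfolding lin_on_def by blast
  ultimately have "f (x - y) = f x + (-1) *s f y" using a unfolding lin_on_def by metis
  then show ?thesis by (simp add: vec_eq_iff)
qed

lemma ker_inv:
  assumes X: "invariant_subspace G \<rho> X" and f: "lin_on X f" "eqv G \<rho> X f"
  shows "invariant_subspace G \<rho> {x\<in>X. f x = 0}"
  using assms lin_on_zero[OF f(1)] unfolding invariant_subspace_def vec.subspace_def lin_on_def eqv_def
  by auto

lemma img_inv:
  assumes X: "invariant_subspace G \<rho> X" and f: "lin_on X f" "eqv G \<rho> X f"
  shows "invariant_subspace G \<rho> (f ` X)"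
  unfolding invariant_subspace_def vec.subspace_def
proof (intro conjI ballI allI)
  have Xs: "vec.subspace X" using X invariant_subspace_def by blast
  show "0 \<in> f ` X" using lin_on_zero[OF f(1) Xs] vec.subspace_0[OF Xs] by force
  fix x y assume "x \<in> f ` X" "y \<in> f ` X"
  then obtain a b where "a \<in> X" "b \<in> X" "x = f a" "y = f b" by auto
  then show "x + y \<in> f ` X" using f Xs unfolding lin_on_def
    by (metis image_eqI vec.subspace_add)
next
  have Xs: "vec.subspace X" using X invariant_subspace_def by blast
  fix c x assume "x \<in> f ` X"
  then obtain a where "a \<in> X" "x = f a" by auto
  then show "c *s x \<in> f ` X" using f Xs unfolding lin_on_def
    by (metis image_eqI vec.subspace_scale)
next
  fix g w assume "g \<in> carrier G" "w \<in> f ` X"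
  then obtain a where "a \<in> X" "w = f a" by auto
  then show "\<rho> g *v w \<in> f ` X" using f X \<open>g \<in> carrier G\<close> unfolding eqv_def invariant_subspace_def
    by (metis image_eqI)
qed

lemma schur1:
  assumes X: "irreducible_submodule G \<rho> X" and Y: "irreducible_submodule G \<rho> Y"
    and f: "lin_on X f" "eqv G \<rho> X f" "f ` X \<subseteq> Y"
  shows "(\<forall>x\<in>X. f x = 0) \<or> bij_betw f X Y"
proof -
  have Xi: "invariant_subspace G \<rho> X" and Xs: "vec.subspace X"
    using X unfolding irreducible_submodule_def invariant_subspace_def by auto
  have "{x\<in>X. f x = 0} = {0} \<or> {x\<in>X. f x = 0} = X"
    using X ker_inv[OF Xi f(1,2)] unfolding irreducible_submodule_def by auto
  then show ?thesis
  proof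
    assume K: "{x\<in>X. f x = 0} = {0}"
    have inj: "inj_on f X"
    proof (rule inj_onI)
      fix x y assume "x \<in> X" "y \<in> X" "f x = f y"
      then have "x - y \<in> {x\<in>X. f x = 0}"
        using lin_on_diff[OF f(1) Xs] vec.subspace_diff[OF Xs] by auto
      then show "x = y" using K by auto
    qed
    have "f ` X \<noteq> {0}"
    proof
      assume "f ` X = {0}"
      then have "X \<subseteq> {x\<in>X. f x = 0}" by auto
      then show False using K X unfolding irreducible_submodule_def by auto
    qed
    moreover have "invariant_subspace G \<rho> (f ` X)" using img_inv[OF Xi f(1,2)] .
    ultimately have "f ` X = Y" using Y f(3) unfolding irreducible_submodule_def by blast
    then show ?thesis using inj bij_betw_def by blast
  qed auto
qed

lemma schur2:
  assumes X: "irreducible_submodule G \<rho> X"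
    and f: "lin_on X f" "eqv G \<rho> X f" "\<forall>x\<in>X. f x \<in> X"
  shows "\<exists>l. \<forall>x\<in>X. f x = l *s x"
proof -
  have Xi: "invariant_subspace G \<rho> X" and Xs: "vec.subspace X"
    using X unfolding irreducible_submodule_def invariant_subspace_def by auto
  have X0: "X \<noteq> {0}" using X unfolding irreducible_submodule_def by auto
  obtain l u where u: "u \<in> X" "u \<noteq> 0" "f u = l *s u" using eigen_exists[OF Xs X0 f(3,1)] by blast
  define h where "h x = f x - l *s x" for x
  have hl: "lin_on X h" using f(1) unfolding lin_on_def h_def
    by (auto simp: vec_eq_iff algebra_simps)
  have he: "eqv G \<rho> X h" using f(2) unfolding eqv_def h_def
    by (auto simp: matrix_vector_mult_diff_distrib vec.scale)
  have K: "invariant_subspace G \<rho> {x\<in>X. h x = 0}" by (rule ker_inv[OF Xi hl he])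
  have "{x\<in>X. h x = 0} \<noteq> {0}" using u by (auto simp: h_def)
  then have "{x\<in>X. h x = 0} = X" using X K unfolding irreducible_submodule_def by blast
  then show ?thesis by (auto simp: h_def)
qed


lemma lin_on_mono: "lin_on X f \<Longrightarrow> Y \<subseteq> X \<Longrightarrow> lin_on Y f"
  unfolding lin_on_def by (meson subsetD)

lemma lin_on_comp: "lin_on X f \<Longrightarrow> f ` X \<subseteq> Y \<Longrightarrow> lin_on Y g \<Longrightarrow> vec.subspace X \<Longrightarrow> lin_on X (g \<circ> f)"
  unfolding lin_on_def by (auto simp: image_subset_iff)

lemma eqv_comp: "eqv G \<rho> X f \<Longrightarrow> f ` X \<subseteq> Y \<Longrightarrow> eqv G \<rho> Y g \<Longrightarrow> invariant_subspace G \<rho> X \<Longrightarrow> eqv G \<rho> X (g \<circ> f)"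
  unfolding eqv_def invariant_subspace_def by (auto simp: image_subset_iff)

lemma eqv_mono: "eqv G \<rho> X f \<Longrightarrow> Y \<subseteq> X \<Longrightarrow> eqv G \<rho> Y f"
  unfolding eqv_def by auto

locale iso =
  fixes G :: "('g, 'b) monoid_scheme" and \<rho> :: "'g \<Rightarrow> complex^'n^'n"
    and k :: nat and n :: "nat \<Rightarrow> nat"
    and W :: "nat \<Rightarrow> nat \<Rightarrow> (complex^'n) set"
    and \<phi> :: "nat \<Rightarrow> nat \<Rightarrow> complex^'n \<Rightarrow> complex^'n"
  assumes rep: "representation G \<rho>" and dec: "isotypic_decomposition G \<rho> k n W \<phi>"
begin

definition "I = Sigma {..<k} (\<lambda>i. {..<n i})"

definition okc :: "complex^'n \<Rightarrow> (nat \<Rightarrow> nat \<Rightarrow> complex^'n) \<Rightarrow> bool" where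
  "okc x c \<longleftrightarrow> (\<forall>i j. (i < k \<and> j < n i \<longrightarrow> c i j \<in> W i j) \<and> (\<not> (i < k \<and> j < n i) \<longrightarrow> c i j = 0)) \<and>
              x = (\<Sum>(i,j)\<in>I. c i j)"

definition "cp x = (THE c. okc x c)"

definition "\<psi> i j = inv_into (W i 0) (\<phi> i j)"

lemma finI: "finite I" unfolding I_def by auto

lemma ex1: "\<exists>!c. okc x c"
proof -
  have "\<forall>x. \<exists>!c. okc x c"
    using dec unfolding isotypic_decomposition_def okc_def I_def by (elim conjE) assumption
  then show ?thesis by blast
qed

lemma cp_ok: "okc x (cp x)"
  unfolding cp_def using ex1 theI' by metis

lemma cp_unique: "okc x c \<Longrightarrow> cp x = c"
  unfolding cp_def using ex1 the1_equality by metis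

lemma cp_in: "i < k \<Longrightarrow> j < n i \<Longrightarrow> cp x i j \<in> W i j"
  using cp_ok unfolding okc_def by blast

lemma cp_out: "\<not> (i < k \<and> j < n i) \<Longrightarrow> cp x i j = 0"
  using cp_ok unfolding okc_def by blast

lemma cp_sum: "x = (\<Sum>(i,j)\<in>I. cp x i j)"
  using cp_ok unfolding okc_def by blast

lemma d1: "\<forall>i<k. 0 < n i"
  using dec unfolding isotypic_decomposition_def by (elim conjE) assumption
lemma d2: "\<forall>i<k. \<forall>j<n i. irreducible_submodule G \<rho> (W i j)"
  using dec unfolding isotypic_decomposition_def by (elim conjE) assumption
lemma d3: "\<forall>i<k. \<forall>j<n i. module_iso G \<rho> (\<phi> i j) (W i 0) (W i j)"
  using dec unfolding isotypic_decomposition_def by (elim conjE) assumption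
lemma d4: "\<forall>i<k. \<forall>i'<k. i \<noteq> i' \<longrightarrow> \<not> (\<exists>f. module_iso G \<rho> f (W i 0) (W i' 0))"
  using dec unfolding isotypic_decomposition_def by (elim conjE) assumption

lemma irr: "i < k \<Longrightarrow> j < n i \<Longrightarrow> irreducible_submodule G \<rho> (W i j)"
  using d2 by blast

lemma inv: "i < k \<Longrightarrow> j < n i \<Longrightarrow> invariant_subspace G \<rho> (W i j)"
  using irr unfolding irreducible_submodule_def by blast

lemma sub: "i < k \<Longrightarrow> j < n i \<Longrightarrow> vec.subspace (W i j)"
  using inv unfolding invariant_subspace_def by blast

lemma npos: "i < k \<Longrightarrow> 0 < n i"
  using d1 by blast

lemma miso: "i < k \<Longrightarrow> j < n i \<Longrightarrow> module_iso G \<rho> (\<phi> i j) (W i 0) (W i j)"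
  using d3 by blast

lemma noniso: "i < k \<Longrightarrow> i' < k \<Longrightarrow> i \<noteq> i' \<Longrightarrow> \<not> module_iso G \<rho> f (W i 0) (W i' 0)"
  using d4 by blast

lemma okc_sumI:
  assumes "\<forall>i j. i < k \<and> j < n i \<longrightarrow> c i j \<in> W i j" "\<forall>i j. \<not> (i < k \<and> j < n i) \<longrightarrow> c i j = 0"
    and "x = (\<Sum>(i,j)\<in>I. c i j)"
  shows "cp x = c"
  using assms by (intro cp_unique) (auto simp: okc_def)

lemma cp_add: "cp (x + y) i j = cp x i j + cp y i j"
proof -
  have "cp (x + y) = (\<lambda>i j. cp x i j + cp y i j)"
  proof (rule okc_sumI)
    show "\<forall>i j. i < k \<and> j < n i \<longrightarrow> cp x i j + cp y i j \<in> W i j"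
      using cp_in sub vec.subspace_add by blast
    show "\<forall>i j. \<not> (i < k \<and> j < n i) \<longrightarrow> cp x i j + cp y i j = 0" using cp_out by simp
    show "x + y = (\<Sum>(i,j)\<in>I. cp x i j + cp y i j)"
      using cp_sum[of x] cp_sum[of y] by (simp add: sum.distrib split_def)
  qed
  then show ?thesis by simp
qed

lemma cp_scale: "cp (a *s x) i j = a *s cp x i j"
proof -
  have "cp (a *s x) = (\<lambda>i j. a *s cp x i j)"
  proof (rule okc_sumI)
    show "\<forall>i j. i < k \<and> j < n i \<longrightarrow> a *s cp x i j \<in> W i j"
      using cp_in sub vec.subspace_scale by blast
    show "\<forall>i j. \<not> (i < k \<and> j < n i) \<longrightarrow> a *s cp x i j = 0" using cp_out by simp
    show "a *s x = (\<Sum>(i,j)\<in>I. a *s cp x i j)"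
      using cp_sum[of x] by (metis (no_types, lifting) case_prod_unfold sum.cong vec.scale_sum_right)
  qed
  then show ?thesis by simp
qed

lemma cp_zero: "cp 0 i j = 0"
  using cp_scale[of 0 0] by simp

lemma cp_lin: "lin_on X (\<lambda>x. cp x i j)"
  unfolding lin_on_def by (simp add: cp_add cp_scale)

lemma cp_sumf: "finite A \<Longrightarrow> cp (\<Sum>a\<in>A. f a) i j = (\<Sum>a\<in>A. cp (f a) i j)"
  by (induction A rule: finite_induct) (auto simp: cp_zero cp_add)

lemma cp_comp:
  assumes "i0 < k" "j0 < n i0" "w \<in> W i0 j0"
  shows "cp w i j = (if i = i0 \<and> j = j0 then w else 0)"
proof -
  have "cp w = (\<lambda>i j. if i = i0 \<and> j = j0 then w else 0)"
  proof (rule okc_sumI)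
    show "\<forall>i j. i < k \<and> j < n i \<longrightarrow> (if i = i0 \<and> j = j0 then w else 0) \<in> W i j"
      using assms sub vec.subspace_0 by auto
    show "\<forall>i j. \<not> (i < k \<and> j < n i) \<longrightarrow> (if i = i0 \<and> j = j0 then w else 0) = 0" using assms by auto
    have "(\<Sum>(i,j)\<in>I. (if i = i0 \<and> j = j0 then w else 0)) = (\<Sum>p\<in>I. (if (i0,j0) = p then w else 0))"
      by (rule sum.cong) (auto split: if_splits)
    also have "\<dots> = w" using assms finI sum.delta[OF finI, of "(i0,j0)" "\<lambda>_. w"] by (auto simp: I_def)
    finally show "w = (\<Sum>(i,j)\<in>I. (if i = i0 \<and> j = j0 then w else 0))" by simp
  qed
  then show ?thesis by simp
qed

lemma rho_sum: "A *v (\<Sum>a\<in>S. f a) = (\<Sum>a\<in>S. A *v f a)"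
  by (induction S rule: infinite_finite_induct) (auto simp: matrix_vector_right_distrib)

lemma cp_rho:
  assumes "g \<in> carrier G"
  shows "cp (\<rho> g *v x) i j = \<rho> g *v cp x i j"
proof -
  have "cp (\<rho> g *v x) = (\<lambda>i j. \<rho> g *v cp x i j)"
  proof (rule okc_sumI)
    show "\<forall>i j. i < k \<and> j < n i \<longrightarrow> \<rho> g *v cp x i j \<in> W i j"
      using cp_in inv assms unfolding invariant_subspace_def by blast
    show "\<forall>i j. \<not> (i < k \<and> j < n i) \<longrightarrow> \<rho> g *v cp x i j = 0" using cp_out by simp
    have "\<rho> g *v x = \<rho> g *v (\<Sum>(i,j)\<in>I. cp x i j)" using cp_sum[of x] by simp
    also have "\<dots> = (\<Sum>(i,j)\<in>I. \<rho> g *v cp x i j)" by (simp add: rho_sum split_def)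
    finally show "\<rho> g *v x = (\<Sum>(i,j)\<in>I. \<rho> g *v cp x i j)" .
  qed
  then show ?thesis by simp
qed

lemma cp_eqv: "eqv G \<rho> X (\<lambda>x. cp x i j)"
  unfolding eqv_def by (simp add: cp_rho)

lemma phi_bij: "i < k \<Longrightarrow> j < n i \<Longrightarrow> bij_betw (\<phi> i j) (W i 0) (W i j)"
  using miso unfolding module_iso_def by blast

lemma phi_lin: "i < k \<Longrightarrow> j < n i \<Longrightarrow> lin_on (W i 0) (\<phi> i j)"
  using miso unfolding module_iso_def lin_on_def by blast

lemma phi_eqv: "i < k \<Longrightarrow> j < n i \<Longrightarrow> eqv G \<rho> (W i 0) (\<phi> i j)"
  using miso unfolding module_iso_def eqv_def by blast

lemma psi_phi: "i < k \<Longrightarrow> j < n i \<Longrightarrow> x \<in> W i 0 \<Longrightarrow> \<psi> i j (\<phi> i j x) = x"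
  unfolding \<psi>_def using phi_bij bij_betw_inv_into_left by metis

lemma phi_psi: "i < k \<Longrightarrow> j < n i \<Longrightarrow> y \<in> W i j \<Longrightarrow> \<phi> i j (\<psi> i j y) = y"
  unfolding \<psi>_def using phi_bij bij_betw_inv_into_right by metis

lemma psi_in: "i < k \<Longrightarrow> j < n i \<Longrightarrow> y \<in> W i j \<Longrightarrow> \<psi> i j y \<in> W i 0"
  unfolding \<psi>_def using phi_bij by (metis bij_betw_def inv_into_into)

lemma phi_in: "i < k \<Longrightarrow> j < n i \<Longrightarrow> x \<in> W i 0 \<Longrightarrow> \<phi> i j x \<in> W i j"
  using phi_bij bij_betw_apply by metis

lemma psi_lin: assumes "i < k" "j < n i" shows "lin_on (W i j) (\<psi> i j)"
proof -
  have n0: "0 < n i" using assms npos by blast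
  note S0 = sub[OF assms(1) n0]
  show ?thesis unfolding lin_on_def
  proof (intro conjI ballI allI)
    fix x y assume xy: "x \<in> W i j" "y \<in> W i j"
    have "x + y = \<phi> i j (\<psi> i j x + \<psi> i j y)"
      using phi_lin[OF assms] psi_in[OF assms] phi_psi[OF assms] xy unfolding lin_on_def by metis
    then show "\<psi> i j (x + y) = \<psi> i j x + \<psi> i j y"
      using psi_phi[OF assms] psi_in[OF assms] xy S0 vec.subspace_add by metis
  next
    fix c x assume x: "x \<in> W i j"
    have "c *s x = \<phi> i j (c *s \<psi> i j x)"
      using phi_lin[OF assms] psi_in[OF assms] phi_psi[OF assms] x unfolding lin_on_def by metis
    then show "\<psi> i j (c *s x) = c *s \<psi> i j x"
      using psi_phi[OF assms] psi_in[OF assms] x S0 vec.subspace_scale by metis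
  qed
qed

lemma psi_eqv: assumes "i < k" "j < n i" shows "eqv G \<rho> (W i j) (\<psi> i j)"
  unfolding eqv_def
proof (intro ballI)
  fix g y assume g: "g \<in> carrier G" and y: "y \<in> W i j"
  have n0: "0 < n i" using assms npos by blast
  have "\<rho> g *v y = \<phi> i j (\<rho> g *v \<psi> i j y)"
    using phi_eqv[OF assms] psi_in[OF assms] phi_psi[OF assms] y g unfolding eqv_def by metis
  moreover have "\<rho> g *v \<psi> i j y \<in> W i 0"
    using inv[OF assms(1) n0] psi_in[OF assms y] g unfolding invariant_subspace_def by blast
  ultimately show "\<psi> i j (\<rho> g *v y) = \<rho> g *v \<psi> i j y"
    using psi_phi[OF assms] by metis
qed

end


lemma indep_fam:
  fixes f :: "nat \<Rightarrow> complex^'n"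
  assumes d: "vec.dim (vec.span (f ` {..<m})) = m" and s: "(\<Sum>b<m. a b *s f b) = 0"
  shows "\<forall>b<m. a b = 0"
proof -
  let ?T = "f ` {..<m}"
  have fin: "finite ?T" by simp
  have "vec.dim (vec.span ?T) \<le> card ?T" by (rule vec.dim_le_card) (auto simp: vec.span_superset)
  moreover have "card ?T \<le> m" using card_image_le[of "{..<m}" f] by simp
  ultimately have c: "card ?T = m" using d by simp
  then have inj: "inj_on f {..<m}" by (simp add: eq_card_imp_inj_on)
  have "vec.independent ?T"
    using vec.card_eq_dim[of ?T "vec.span ?T"] c d fin vec.span_superset[of ?T] by simp
  then have ind: "\<forall>c. (\<Sum>v\<in>?T. c v *s v) = 0 \<longrightarrow> (\<forall>v\<in>?T. c v = 0)"
    using vec.independent_explicit by blast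
  define c where "c = (\<lambda>v. a (inv_into {..<m} f v))"
  have "(\<Sum>v\<in>?T. c v *s v) = (\<Sum>b<m. c (f b) *s f b)"
    using sum.reindex[OF inj, of "\<lambda>v. c v *s v"] by simp
  also have "\<dots> = (\<Sum>b<m. a b *s f b)"
    by (rule sum.cong) (auto simp: c_def inv_into_f_f[OF inj])
  finally have "\<forall>v\<in>?T. c v = 0" using ind s by simp
  then show ?thesis by (auto simp: c_def inv_into_f_f[OF inj])
qed

context iso
begin

lemma Ecomm: "\<forall>g\<in>carrier G. E ** \<rho> g = \<rho> g ** E \<Longrightarrow> g \<in> carrier G \<Longrightarrow> E *v (\<rho> g *v w) = \<rho> g *v (E *v w)"
  by (simp add: matrix_vector_mul_assoc)

lemma block:
  assumes E: "\<forall>g\<in>carrier G. E ** \<rho> g = \<rho> g ** E"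
    and idx: "i0 < k" "j0 < n i0" "i < k" "j < n i"
  shows "(i \<noteq> i0 \<longrightarrow> (\<forall>w\<in>W i0 j0. cp (E *v w) i j = 0)) \<and>
         (i = i0 \<longrightarrow> (\<exists>e. \<forall>w\<in>W i0 j0. cp (E *v w) i j = e *s \<phi> i j (\<psi> i j0 w)))"
proof -
  define f where "f w = cp (E *v w) i j" for w
  have n0: "0 < n i0" "0 < n i" using idx npos by auto
  have flin: "lin_on X f" for X unfolding f_def lin_on_def
    by (simp add: cp_add cp_scale matrix_vector_right_distrib vec.scale)
  have feqv: "eqv G \<rho> X f" for X unfolding f_def eqv_def
    using Ecomm[OF E] by (simp add: cp_rho)
  have fmap: "f ` X \<subseteq> W i j" for X unfolding f_def using cp_in idx by auto
  define h where "h = \<psi> i j \<circ> (f \<circ> \<phi> i0 j0)"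
  have phimap: "\<phi> i0 j0 ` W i0 0 \<subseteq> W i0 j0" using phi_in idx by auto
  have hlin: "lin_on (W i0 0) h" unfolding h_def
    apply (rule lin_on_comp[OF lin_on_comp[OF phi_lin[OF idx(1,2)] phimap flin]])
    using fmap psi_lin[OF idx(3,4)] sub[OF idx(1) n0(1)] by auto
  have heqv: "eqv G \<rho> (W i0 0) h" unfolding h_def
    apply (rule eqv_comp[OF eqv_comp[OF phi_eqv[OF idx(1,2)] phimap feqv]])
    using fmap psi_eqv[OF idx(3,4)] inv[OF idx(1) n0(1)] by auto
  have hmap: "h ` W i0 0 \<subseteq> W i 0" unfolding h_def using fmap psi_in[OF idx(3,4)] by auto
  have key: "f w = \<phi> i j (h (\<psi> i0 j0 w))" if w: "w \<in> W i0 j0" for w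
  proof -
    have "f w \<in> W i j" using fmap by blast
    then show ?thesis unfolding h_def using phi_psi[OF idx(1,2) w] phi_psi[OF idx(3,4)] by simp
  qed
  show ?thesis
  proof (intro conjI impI)
    assume ne: "i \<noteq> i0"
    have "(\<forall>x\<in>W i0 0. h x = 0) \<or> bij_betw h (W i0 0) (W i 0)"
      by (rule schur1[OF irr[OF idx(1) n0(1)] irr[OF idx(3) n0(2)] hlin heqv hmap])
    moreover have "\<not> bij_betw h (W i0 0) (W i 0)"
    proof
      assume "bij_betw h (W i0 0) (W i 0)"
      then have "module_iso G \<rho> h (W i0 0) (W i 0)"
        using hlin heqv unfolding module_iso_def lin_on_def eqv_def by blast
      then show False using noniso idx ne by blast
    qed
    ultimately have hz: "\<forall>x\<in>W i0 0. h x = 0" by blast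
    show "\<forall>w\<in>W i0 j0. cp (E *v w) i j = 0"
    proof
      fix w assume w: "w \<in> W i0 j0"
      have "f w = \<phi> i j 0" using key[OF w] hz psi_in[OF idx(1,2) w] by simp
      then show "cp (E *v w) i j = 0"
        using lin_on_zero[OF phi_lin[OF idx(3,4)] sub[OF idx(3) n0(2)]] by (simp add: f_def)
    qed
  next
    assume eq: "i = i0"
    have "\<forall>x\<in>W i0 0. h x \<in> W i0 0" using hmap eq by auto
    then obtain e where e: "\<forall>x\<in>W i0 0. h x = e *s x"
      using schur2[OF irr[OF idx(1) n0(1)] hlin heqv] by blast
    show "\<exists>e. \<forall>w\<in>W i0 j0. cp (E *v w) i j = e *s \<phi> i j (\<psi> i j0 w)"
    proof (intro exI ballI)
      fix w assume w: "w \<in> W i0 j0"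
      have "f w = \<phi> i j (e *s \<psi> i0 j0 w)" using key[OF w] e psi_in[OF idx(1,2) w] by simp
      also have "\<dots> = e *s \<phi> i j (\<psi> i0 j0 w)"
        using phi_lin[OF idx(3,4)] psi_in[OF idx(1,2) w] eq unfolding lin_on_def by simp
      finally show "cp (E *v w) i j = e *s \<phi> i j (\<psi> i j0 w)" using eq by (simp add: f_def)
    qed
  qed
qed

end

context iso
begin

lemma cp_of:
  assumes "\<forall>i<k. \<forall>j<n i. c i j \<in> W i j" "v = (\<Sum>(i,j)\<in>I. c i j)" "i < k" "j < n i"
  shows "cp v i j = c i j"
proof -
  have "cp v = (\<lambda>i j. if i < k \<and> j < n i then c i j else 0)"
  proof (rule okc_sumI)
    show "v = (\<Sum>(i,j)\<in>I. if i < k \<and> j < n i then c i j else 0)"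
      using assms(2) by (auto intro!: sum.cong simp: I_def)
  qed (use assms in auto)
  then show ?thesis using assms by simp
qed

lemma E_zero:
  assumes E: "\<forall>g\<in>carrier G. E ** \<rho> g = \<rho> g ** E" and Ev: "E *v v = 0"
    and gen: "generic k n W \<phi> v"
  shows "E = 0"
proof -
  obtain c where c: "\<forall>i<k. \<forall>j<n i. c i j \<in> W i j" "v = (\<Sum>(i,j)\<in>I. c i j)"
    "\<forall>i<k. vec.dim (vec.span ((\<lambda>j. \<psi> i j (c i j)) ` {..<n i})) = n i"
    using gen unfolding generic_def I_def \<psi>_def by blast
  have comp0: "cp (E *v w) i j = 0"
    if idx: "i0 < k" "j0 < n i0" "w \<in> W i0 j0" "i < k" "j < n i" for i0 j0 w i j
  proof (cases "i = i0")
    case False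
    then show ?thesis using block[OF E idx(1,2,4,5)] idx(3) by blast
  next
    case True
    have "\<forall>b\<in>{..<n i}. \<exists>e. \<forall>w\<in>W i b. cp (E *v w) i j = e *s \<phi> i j (\<psi> i b w)"
      using block[OF E idx(4) _ idx(4,5)] by blast
    then obtain e where e: "\<forall>b\<in>{..<n i}. \<forall>w\<in>W i b. cp (E *v w) i j = e b *s \<phi> i j (\<psi> i b w)"
      by (metis bchoice)
    define vv where "vv b = \<psi> i b (c i b)" for b
    have vvin: "vv b \<in> W i 0" if "b < n i" for b
      unfolding vv_def using psi_in[OF idx(4) that] c(1) idx(4) that by blast
    have "0 = cp (E *v v) i j" using Ev cp_zero by simp
    also have "\<dots> = cp (\<Sum>(a,b)\<in>I. E *v c a b) i j"
      using c(2) by (simp add: rho_sum split_def)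
    also have "\<dots> = (\<Sum>(a,b)\<in>I. cp (E *v c a b) i j)"
      using finI by (simp add: cp_sumf split_def)
    also have "\<dots> = (\<Sum>(a,b)\<in>I. (if a = i then e b *s \<phi> i j (vv b) else 0))"
    proof (rule sum.cong)
      fix p assume p: "p \<in> I"
      obtain a b where ab: "p = (a,b)" "a < k" "b < n a" using p unfolding I_def by auto
      show "(case p of (a, b) \<Rightarrow> cp (E *v c a b) i j) = (case p of (a, b) \<Rightarrow> if a = i then e b *s \<phi> i j (vv b) else 0)"
      proof (cases "a = i")
        case True then show ?thesis using e ab c(1) by (auto simp: vv_def)
      next
        case False then show ?thesis using block[OF E ab(2,3) idx(4,5)] ab c(1) by auto
      qed
    qed simp
    also have "\<dots> = (\<Sum>a<k. \<Sum>b<n a. (if a = i then e b *s \<phi> i j (vv b) else 0))"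
      unfolding I_def by (subst sum.Sigma) auto
    also have "\<dots> = (\<Sum>a<k. if a = i then (\<Sum>b<n i. e b *s \<phi> i j (vv b)) else 0)"
      by (rule sum.cong) auto
    also have "\<dots> = (\<Sum>b<n i. e b *s \<phi> i j (vv b))"
      using idx(4) by simp
    also have "\<dots> = (\<Sum>b<n i. \<phi> i j (e b *s vv b))"
      using phi_lin[OF idx(4,5)] vvin unfolding lin_on_def by simp
    also have "\<dots> = \<phi> i j (\<Sum>b<n i. e b *s vv b)"
      using vvin sub[OF idx(4) npos[OF idx(4)]]
      by (subst lin_on_sum[OF phi_lin[OF idx(4,5)]]) (auto intro: vec.subspace_scale)
    finally have z: "\<phi> i j (\<Sum>b<n i. e b *s vv b) = \<phi> i j 0" 
      using lin_on_zero[OF phi_lin[OF idx(4,5)] sub[OF idx(4) npos[OF idx(4)]]] by simp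
    have S0: "vec.subspace (W i 0)" using sub[OF idx(4) npos[OF idx(4)]] .
    have "(\<Sum>b<n i. e b *s vv b) \<in> W i 0"
      using vvin S0 by (intro vec.subspace_sum) (auto intro: vec.subspace_scale)
    moreover have "0 \<in> W i 0" using S0 vec.subspace_0 by blast
    ultimately have "(\<Sum>b<n i. e b *s vv b) = 0"
      using z phi_bij[OF idx(4,5)] unfolding bij_betw_def inj_on_def by blast
    moreover have "vec.dim (vec.span (vv ` {..<n i})) = n i"
      using c(3) idx(4) unfolding vv_def by blast
    ultimately have "\<forall>b<n i. e b = 0" using indep_fam by blast
    then show ?thesis using e idx True by auto
  qed
  have "E *v x = 0" for x
  proof -
    have "E *v x = (\<Sum>(a,b)\<in>I. E *v cp x a b)"
      using cp_sum[of x] by (metis (no_types, lifting) rho_sum split_def sum.cong)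
    also have "\<dots> = (\<Sum>(a,b)\<in>I. 0)"
    proof (rule sum.cong)
      fix p assume p: "p \<in> I"
      obtain a b where ab: "p = (a,b)" "a < k" "b < n a" using p unfolding I_def by auto
      let ?y = "E *v cp x a b"
      have "?y = (\<Sum>(i,j)\<in>I. cp ?y i j)" by (rule cp_sum)
      also have "\<dots> = (\<Sum>(i,j)\<in>I. 0)"
        by (rule sum.cong) (auto simp: I_def intro!: comp0[OF ab(2,3) cp_in[OF ab(2,3)]])
      finally show "(case p of (a, b) \<Rightarrow> E *v cp x a b) = (case p of (a, b) \<Rightarrow> 0)" using ab by simp
    qed simp
    finally show ?thesis by simp
  qed
  then show ?thesis by (simp add: matrix_eq)
qed

end

definition Lm :: "complex^'n^'n \<Rightarrow> complex \<Rightarrow> complex^'n^'n" where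
  "Lm D t = (\<chi> a b. (if a = b then 1 else 0) + (t - 1) * D $ a $ b)"

lemma Lm_apply: "Lm D t *v x = x + (t - 1) *s (D *v x)"
proof -
  have "Lm D t = mat 1 + (\<chi> a b. (t - 1) * D $ a $ b)"
    by (simp add: Lm_def vec_eq_iff mat_def)
  moreover have "(\<chi> a b. (t - 1) * D $ a $ b) *v x = (t - 1) *s (D *v x)"
    by (simp add: vec_eq_iff matrix_vector_mult_def left_diff_distrib sum_subtractf sum_distrib_left mult.assoc)
  ultimately show ?thesis by (simp add: matrix_vector_mult_add_rdistrib)
qed

lemma Lm_mult:
  assumes DD: "D ** D = D"
  shows "Lm D s ** Lm D t = Lm D (s * t)"
proof -
  have "(Lm D s ** Lm D t) *v x = Lm D (s * t) *v x" for x
  proof -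
    define d where "d = D *v x"
    have dd: "D *v d = d" using DD by (simp add: d_def matrix_vector_mul_assoc)
    have e2: "D *v (x + (t - 1) *s d) = d + (t - 1) *s d"
      by (simp only: matrix_vector_right_distrib vec.scale dd d_def[symmetric])
    have "(Lm D s ** Lm D t) *v x = Lm D s *v (Lm D t *v x)" by (simp add: matrix_vector_mul_assoc)
    also have "\<dots> = (x + (t - 1) *s d) + (s - 1) *s (D *v (x + (t - 1) *s d))"
      by (simp only: Lm_apply d_def)
    also have "\<dots> = (x + (t - 1) *s d) + (s - 1) *s (d + (t - 1) *s d)" by (simp only: e2)
    also have "\<dots> = x + (s * t - 1) *s d" by (simp add: vec_eq_iff algebra_simps)
    finally show ?thesis by (simp only: Lm_apply d_def)
  qed
  then show ?thesis by (simp add: matrix_eq)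
qed

lemma Lm_one: "Lm D 1 = mat 1"
  by (simp add: matrix_eq Lm_apply)

lemma Lm_inv:
  assumes DD: "D ** D = D" and t: "t \<noteq> 0"
  shows "invertible (Lm D t)"
  unfolding invertible_def
  using Lm_mult[OF DD, of t "1/t"] Lm_mult[OF DD, of "1/t" t] t Lm_one by (intro exI[of _ "Lm D (1/t)"]) auto

lemma Lm_laurent: "laurent_poly_fun (\<lambda>t. Lm D t $ a $ b)"
proof -
  define c where "c = (\<lambda>m::int. if m = 0 then (if a = b then 1 else 0) - D $ a $ b else if m = 1 then D $ a $ b else (0::complex))"
  have s: "{-1..1::int} = {-1, 0, 1}" by auto
  have "\<forall>t. t \<noteq> 0 \<longrightarrow> Lm D t $ a $ b = (\<Sum>m\<in>{-1..1}. c m * t powi m)"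
    unfolding s by (simp add: c_def Lm_def algebra_simps)
  then show ?thesis unfolding laurent_poly_fun_def by (intro exI[of _ c] exI[of _ 1]) simp
qed

lemma L_exists:
  assumes DD: "D ** D = D" and comm: "\<forall>g\<in>carrier G. D ** \<rho> g = \<rho> g ** D"
    and Dv: "D *v v = 0" and D0: "D \<noteq> 0"
  shows "\<exists>L. one_param_subgroup L
                     \<and> (\<forall>t. t \<noteq> 0 \<longrightarrow> (\<forall>g\<in>carrier G. L t ** \<rho> g = \<rho> g ** L t))
                     \<and> (\<exists>t. t \<noteq> 0 \<and> L t \<noteq> mat 1)
                     \<and> (\<forall>t. t \<noteq> 0 \<longrightarrow> L t *v v = v)"
proof (intro exI[of _ "Lm D"] conjI)
  show "one_param_subgroup (Lm D)"
    unfolding one_param_subgroup_def using Lm_inv[OF DD] Lm_mult[OF DD] Lm_laurent by metis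
  show "\<forall>t. t \<noteq> 0 \<longrightarrow> (\<forall>g\<in>carrier G. Lm D t ** \<rho> g = \<rho> g ** Lm D t)"
  proof (intro allI impI ballI)
    fix t g assume g: "g \<in> carrier G"
    have "(Lm D t ** \<rho> g) *v x = (\<rho> g ** Lm D t) *v x" for x
    proof -
      have c: "D *v (\<rho> g *v x) = \<rho> g *v (D *v x)"
        using comm g by (simp add: matrix_vector_mul_assoc)
      have "(Lm D t ** \<rho> g) *v x = \<rho> g *v x + (t - 1) *s (D *v (\<rho> g *v x))"
        by (simp only: matrix_vector_mul_assoc[symmetric] Lm_apply)
      also have "\<dots> = \<rho> g *v (x + (t - 1) *s (D *v x))"
        by (simp only: c matrix_vector_right_distrib vec.scale)
      also have "\<dots> = (\<rho> g ** Lm D t) *v x"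
        by (simp only: matrix_vector_mul_assoc[symmetric] Lm_apply)
      finally show ?thesis .
    qed
    then show "Lm D t ** \<rho> g = \<rho> g ** Lm D t" by (simp add: matrix_eq)
  qed
  obtain x where x: "D *v x \<noteq> 0" using D0 by (metis matrix_eq matrix_vector_mult_0)
  have "Lm D 2 *v x \<noteq> x" using x by (simp add: Lm_apply vec_eq_iff)
  then show "\<exists>t. t \<noteq> 0 \<and> Lm D t \<noteq> mat 1" by (intro exI[of _ 2]) auto
  show "\<forall>t. t \<noteq> 0 \<longrightarrow> Lm D t *v v = v" using Dv by (simp add: Lm_apply)
qed


lemma mat_of:
  fixes f :: "complex^'n \<Rightarrow> complex^'n"
  assumes "lin_on UNIV f" shows "\<exists>M. \<forall>x. M *v x = f x"
proof -
  have "Vector_Spaces.linear (*s) (*s) f"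
    using assms unfolding lin_on_def Vector_Spaces.linear_iff
    by (simp add: vec.vector_space_axioms)
  then show ?thesis using matrix_works by blast
qed

lemma dep_fam:
  fixes f :: "nat \<Rightarrow> complex^'n"
  assumes d: "vec.dim (vec.span (f ` {..<m})) \<noteq> m"
  shows "\<exists>a. (\<exists>j<m. a j \<noteq> 0) \<and> (\<Sum>j<m. a j *s f j) = 0"
proof (cases "inj_on f {..<m}")
  case False
  then obtain p q where pq: "p < m" "q < m" "p \<noteq> q" "f p = f q"
    unfolding inj_on_def by auto
  define a where "a = (\<lambda>k. if k = p then (1::complex) else if k = q then -1 else 0)"
  have "(\<Sum>k<m. a k *s f k) = (\<Sum>k<m. (if k = p then f p else 0) + (if k = q then - f q else 0))"
    by (rule sum.cong) (auto simp: a_def pq)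
  also have "\<dots> = 0" using pq by (simp add: sum.distrib)
  finally show ?thesis using pq by (intro exI[of _ a]) (auto simp: a_def)
next
  case True
  let ?T = "f ` {..<m}"
  have card: "card ?T = m" using True by (simp add: card_image)
  have "vec.dependent ?T"
  proof (rule ccontr)
    assume "\<not> vec.dependent ?T"
    then have "vec.dim (vec.span ?T) = card ?T" using vec.dim_span_eq_card_independent by blast
    then show False using card d by simp
  qed
  then obtain u where u: "\<exists>v\<in>?T. u v \<noteq> 0" "(\<Sum>v\<in>?T. u v *s v) = 0"
    using vec.dependent_finite[of ?T] by auto
  have "(\<Sum>k<m. u (f k) *s f k) = (\<Sum>v\<in>?T. u v *s v)"
    using sum.reindex[OF True, of "\<lambda>v. u v *s v"] by simp
  then show ?thesis using u by (intro exI[of _ "\<lambda>k. u (f k)"]) auto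
qed

context iso
begin

lemma D_from_nongeneric:
  assumes ng: "\<not> generic k n W \<phi> v"
  shows "\<exists>D. D ** D = D \<and> (\<forall>g\<in>carrier G. D ** \<rho> g = \<rho> g ** D) \<and> D *v v = 0 \<and> D \<noteq> 0"
proof -
  have "\<exists>i<k. vec.dim (vec.span ((\<lambda>j. \<psi> i j (cp v i j)) ` {..<n i})) \<noteq> n i"
  proof (rule ccontr)
    assume "\<not> ?thesis"
    then have "generic k n W \<phi> v" unfolding generic_def \<psi>_def
      using cp_in cp_sum[of v] unfolding I_def by (intro exI[of _ "cp v"]) auto
    then show False using ng by blast
  qed
  then obtain i where i: "i < k" and dd: "vec.dim (vec.span ((\<lambda>j. \<psi> i j (cp v i j)) ` {..<n i})) \<noteq> n i"
    by blast
  obtain a where a: "\<exists>j<n i. a j \<noteq> 0" "(\<Sum>j<n i. a j *s \<psi> i j (cp v i j)) = 0"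
    using dep_fam[OF dd] by blast
  then obtain js where js: "js < n i" "a js \<noteq> 0" by blast
  have n0: "0 < n i" using npos i by blast
  have S0: "vec.subspace (W i 0)" using sub[OF i n0] .
  define s where "s x = (\<Sum>j<n i. a j *s \<psi> i j (cp x i j))" for x
  define Df where "Df x = (1 / a js) *s \<phi> i js (s x)" for x
  have psiin: "\<psi> i j (cp x i j) \<in> W i 0" if "j < n i" for j x
    using psi_in[OF i that cp_in[OF i that]] .
  have sin: "s x \<in> W i 0" for x
    unfolding s_def using psiin S0 by (intro vec.subspace_sum) (auto intro: vec.subspace_scale)
  have psil: "\<psi> i j (cp (x + y) i j) = \<psi> i j (cp x i j) + \<psi> i j (cp y i j)"
    "\<psi> i j (cp (c *s x) i j) = c *s \<psi> i j (cp x i j)" if "j < n i" for j x y c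
    using psi_lin[OF i that] cp_in[OF i that] unfolding lin_on_def by (simp_all add: cp_add cp_scale)
  have s_add: "s (x + y) = s x + s y" for x y
    unfolding s_def by (simp add: psil sum.distrib vector_add_ldistrib)
  have s_scale: "s (c *s x) = c *s s x" for c x
    unfolding s_def by (simp add: psil vec.scale_sum_right vector_smult_assoc mult.commute)
  have phil1: "\<phi> i js (p + q) = \<phi> i js p + \<phi> i js q"
    if "p \<in> W i 0" "q \<in> W i 0" for p q
    using phi_lin[OF i js(1)] that unfolding lin_on_def by auto
  have phil2: "\<phi> i js (c *s p) = c *s \<phi> i js p"
    if "p \<in> W i 0" for p c
    using phi_lin[OF i js(1)] that unfolding lin_on_def by auto
  have Dlin: "lin_on UNIV Df"
    unfolding lin_on_def Df_def
    by (simp add: s_add s_scale phil1 phil2 sin vector_add_ldistrib vector_smult_assoc mult.commute)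
  then obtain M where M: "\<forall>x. M *v x = Df x" using mat_of by blast
  have Dv: "Df v = 0"
  proof -
    have "s v = 0" using a(2) by (simp add: s_def)
    then show ?thesis unfolding Df_def using lin_on_zero[OF phi_lin[OF i js(1)] S0] by simp
  qed
  have s_rho: "s (\<rho> g *v x) = \<rho> g *v s x" if g: "g \<in> carrier G" for g x
  proof -
    have "s (\<rho> g *v x) = (\<Sum>j<n i. a j *s (\<rho> g *v \<psi> i j (cp x i j)))"
      unfolding s_def using psi_eqv[OF i] cp_in[OF i] g
      by (intro sum.cong) (auto simp: cp_rho eqv_def)
    also have "\<dots> = \<rho> g *v s x" unfolding s_def by (simp add: rho_sum vec.scale)
    finally show ?thesis .
  qed
  have D_rho: "Df (\<rho> g *v x) = \<rho> g *v Df x" if g: "g \<in> carrier G" for g x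
    unfolding Df_def using s_rho[OF g] phi_eqv[OF i js(1)] g sin unfolding eqv_def by (simp add: vec.scale)
  have Din: "Df x \<in> W i js" for x
    unfolding Df_def using phi_in[OF i js(1) sin] sub[OF i js(1)] vec.subspace_scale by blast
  have s_comp: "s y = a js *s \<psi> i js y" if y: "y \<in> W i js" for y
  proof -
    have "s y = (\<Sum>j<n i. if j = js then a js *s \<psi> i js y else 0)"
      unfolding s_def using cp_comp[OF i js(1) y] lin_on_zero[OF psi_lin[OF i] sub[OF i]]
      by (intro sum.cong) auto
    also have "\<dots> = a js *s \<psi> i js y" using js by simp
    finally show ?thesis .
  qed
  have DD: "Df (Df x) = Df x" for x
  proof -
    have "\<psi> i js (Df x) = (1 / a js) *s s x"
      unfolding Df_def using phil2[OF sin] psi_phi[OF i js(1)] sin S0 vec.subspace_scale by metis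
    then have "s (Df x) = s x" using s_comp[OF Din] js by (simp add: vector_smult_assoc)
    then show ?thesis by (simp add: Df_def)
  qed
  obtain w where w: "w \<in> W i 0" "w \<noteq> 0"
    using irr[OF i n0] S0 vec.subspace_0 unfolding irreducible_submodule_def by blast
  have D0: "Df (\<phi> i js w) \<noteq> 0"
  proof -
    have pw: "\<phi> i js w \<in> W i js" using phi_in[OF i js(1) w(1)] .
    have "s (\<phi> i js w) = a js *s w" using s_comp[OF pw] psi_phi[OF i js(1) w(1)] by simp
    then have "Df (\<phi> i js w) = \<phi> i js w"
      unfolding Df_def using phil2[OF w(1)] js by (simp add: vector_smult_assoc)
    moreover have "\<phi> i js w \<noteq> 0"
    proof
      assume "\<phi> i js w = 0"
      then have "\<phi> i js w = \<phi> i js 0" using lin_on_zero[OF phi_lin[OF i js(1)] S0] by simp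
      then show False using phi_bij[OF i js(1)] w S0 vec.subspace_0 unfolding bij_betw_def inj_on_def by blast
    qed
    ultimately show ?thesis by simp
  qed
  show ?thesis
  proof (intro exI[of _ M] conjI)
    show "M ** M = M" by (simp add: matrix_eq matrix_vector_mul_assoc[symmetric] M DD)
    show "\<forall>g\<in>carrier G. M ** \<rho> g = \<rho> g ** M"
      by (simp add: matrix_eq matrix_vector_mul_assoc[symmetric] M D_rho)
    show "M *v v = 0" using M Dv by simp
    show "M \<noteq> 0" using M D0 by (metis matrix_vector_mult_0)
  qed
qed

end


lemma span_inv:
  assumes rep: "representation G \<rho>" and g: "g \<in> carrier G"
    and x: "x \<in> vec.span ((\<lambda>h. \<rho> h *v v) ` carrier G)"
  shows "\<rho> g *v x \<in> vec.span ((\<lambda>h. \<rho> h *v v) ` carrier G)"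
proof -
  let ?U = "vec.span ((\<lambda>h. \<rho> h *v v) ` carrier G)"
  have grp: "group G" using rep unfolding representation_def by blast
  have "(\<lambda>h. \<rho> h *v v) ` carrier G \<subseteq> {y. \<rho> g *v y \<in> ?U}"
  proof
    fix y assume "y \<in> (\<lambda>h. \<rho> h *v v) ` carrier G"
    then obtain h where h: "h \<in> carrier G" "y = \<rho> h *v v" by blast
    have "\<rho> g *v y = \<rho> (g \<otimes>\<^bsub>G\<^esub> h) *v v"
      using rep g h unfolding representation_def by (simp add: matrix_vector_mul_assoc)
    moreover have "g \<otimes>\<^bsub>G\<^esub> h \<in> carrier G" using grp g h by (simp add: group.is_monoid monoid.m_closed)
    ultimately show "y \<in> {y. \<rho> g *v y \<in> ?U}" by (auto intro: vec.span_base)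
  qed
  moreover have "vec.subspace {y. \<rho> g *v y \<in> ?U}"
    unfolding vec.subspace_def
    by (simp add: matrix_vector_right_distrib vec.scale vec.span_add vec.span_scale vec.span_zero)
  ultimately have "?U \<subseteq> {y. \<rho> g *v y \<in> ?U}" by (rule vec.span_minimal)
  then show ?thesis using x by blast
qed

lemma D_from_complement:
  assumes rep: "representation G \<rho>" and cr: "completely_reducible G \<rho>"
    and ne: "vec.span ((\<lambda>g. \<rho> g *v v) ` carrier G) \<noteq> UNIV"
  shows "\<exists>D. D ** D = D \<and> (\<forall>g\<in>carrier G. D ** \<rho> g = \<rho> g ** D) \<and> D *v v = 0 \<and> D \<noteq> 0"
proof -
  define U where "U = vec.span ((\<lambda>g. \<rho> g *v v) ` carrier G)"
  have Ui: "invariant_subspace G \<rho> U"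
    unfolding invariant_subspace_def U_def using span_inv[OF rep] vec.subspace_span by blast
  from cr[unfolded completely_reducible_def, rule_format, OF Ui]
  obtain W' where W'all: "invariant_subspace G \<rho> W' \<and> U \<inter> W' = {0} \<and>
    {w + w' | w w'. w \<in> U \<and> w' \<in> W'} = UNIV"
    by (erule exE)
  note W' = W'all[THEN conjunct1] W'all[THEN conjunct2, THEN conjunct1] W'all[THEN conjunct2, THEN conjunct2]
  have Us: "vec.subspace U" and Ws: "vec.subspace W'" using Ui W'(1) unfolding invariant_subspace_def by auto
  define P where "P x = (THE w. w \<in> W' \<and> x - w \<in> U)" for x
  have uniq: "w1 = w2" if "w1 \<in> W'" "x - w1 \<in> U" "w2 \<in> W'" "x - w2 \<in> U" for x w1 w2
  proof -
    have a: "w1 - w2 \<in> W'" using that(1,3) Ws vec.subspace_diff by blast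
    have "(x - w2) - (x - w1) \<in> U" using that(2,4) Us vec.subspace_diff by blast
    then have b: "w1 - w2 \<in> U" by simp
    have "w1 - w2 \<in> U \<inter> W'" using b a by (rule IntI)
    then have "w1 - w2 \<in> {0}" by (simp only: W'(2))
    then show ?thesis by simp
  qed
  have ex: "\<exists>w. w \<in> W' \<and> x - w \<in> U" for x
  proof -
    have "x \<in> {w + w' | w w'. w \<in> U \<and> w' \<in> W'}" by (subst W'(3)) (rule UNIV_I)
    then have "\<exists>u w'. x = u + w' \<and> u \<in> U \<and> w' \<in> W'" by (simp only: mem_Collect_eq)
    then obtain u w' where "x = u + w'" "u \<in> U" "w' \<in> W'" by (elim exE conjE)
    then show ?thesis by (intro exI[of _ w']) simp
  qed
  have Pok: "P x \<in> W' \<and> x - P x \<in> U" for x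
  proof -
    obtain w where w: "w \<in> W' \<and> x - w \<in> U" using ex[of x] by (elim exE)
    have "\<exists>!w. w \<in> W' \<and> x - w \<in> U"
    proof (rule ex1I[of _ w])
      show "w \<in> W' \<and> x - w \<in> U" by (rule w)
      fix y assume "y \<in> W' \<and> x - y \<in> U"
      then show "y = w" using uniq[of y x w] w by (elim conjE) simp
    qed
    then show ?thesis unfolding P_def by (rule theI')
  qed
  have Pchar: "P x = w" if "w \<in> W'" "x - w \<in> U" for x w
    using uniq[of "P x" x w] Pok[of x] that by (elim conjE) simp
  have Padd: "P (x + y) = P x + P y" for x y
  proof (rule Pchar)
    show "P x + P y \<in> W'" using vec.subspace_add[OF Ws conjunct1[OF Pok] conjunct1[OF Pok]] .
    have "(x - P x) + (y - P y) \<in> U" using vec.subspace_add[OF Us conjunct2[OF Pok] conjunct2[OF Pok]] .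
    moreover have "x + y - (P x + P y) = (x - P x) + (y - P y)" by (simp add: algebra_simps)
    ultimately show "x + y - (P x + P y) \<in> U" by (simp only:)
  qed
  have Pscale: "P (c *s x) = c *s P x" for c x
  proof (rule Pchar)
    show "c *s P x \<in> W'" using vec.subspace_scale[OF Ws conjunct1[OF Pok]] .
    have "c *s (x - P x) \<in> U" using vec.subspace_scale[OF Us conjunct2[OF Pok]] .
    moreover have "c *s x - c *s P x = c *s (x - P x)" by (simp add: vec_eq_iff algebra_simps)
    ultimately show "c *s x - c *s P x \<in> U" by (simp only:)
  qed
  have "lin_on UNIV P" unfolding lin_on_def using Padd Pscale by simp
  then obtain M where M: "\<forall>x. M *v x = P x" using mat_of[of P] by blast
  have PP: "P (P x) = P x" for x using Pchar[of "P x" "P x"] conjunct1[OF Pok] vec.subspace_0[OF Us] by simp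
  have Prho: "P (\<rho> g *v x) = \<rho> g *v P x" if g: "g \<in> carrier G" for g x
  proof (rule Pchar)
    show "\<rho> g *v P x \<in> W'" using W'(1) conjunct1[OF Pok] g unfolding invariant_subspace_def by blast
    have "\<rho> g *v (x - P x) \<in> U" using Ui conjunct2[OF Pok] g unfolding invariant_subspace_def by blast
    moreover have "\<rho> g *v x - \<rho> g *v P x = \<rho> g *v (x - P x)" by (simp add: matrix_vector_mult_diff_distrib)
    ultimately show "\<rho> g *v x - \<rho> g *v P x \<in> U" by (simp only:)
  qed
  have vU: "v \<in> U"
  proof -
    have "group G" using rep unfolding representation_def by blast
    then have "\<one>\<^bsub>G\<^esub> \<in> carrier G" by (simp add: group.is_monoid monoid.one_closed)
    moreover have "\<rho> \<one>\<^bsub>G\<^esub> *v v = v" using rep unfolding representation_def by simp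
    ultimately show ?thesis unfolding U_def by (metis image_eqI vec.span_base)
  qed
  have Pv: "P v = 0" using Pchar[of 0 v] vU vec.subspace_0[OF Ws] by simp
  obtain x where x: "x \<notin> U" using ne U_def by blast
  have Px: "P x \<noteq> 0" using Pok[of x] x by auto
  show ?thesis
  proof (intro exI[of _ M] conjI)
    show "M ** M = M" by (simp add: matrix_eq matrix_vector_mul_assoc[symmetric] M PP)
    show "\<forall>g\<in>carrier G. M ** \<rho> g = \<rho> g ** M"
      by (simp add: matrix_eq matrix_vector_mul_assoc[symmetric] M Prho)
    show "M *v v = 0" using M Pv by simp
    show "M \<noteq> 0" using M Px by (metis matrix_vector_mult_0)
  qed
qed

lemma no_L_if_span:
  assumes sp: "vec.span ((\<lambda>g. \<rho> g *v v) ` carrier G) = UNIV"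
    and L: "\<forall>t. t \<noteq> 0 \<longrightarrow> (\<forall>g\<in>carrier G. L t ** \<rho> g = \<rho> g ** L t)"
      "\<forall>t. t \<noteq> 0 \<longrightarrow> L t *v v = v" and t: "t \<noteq> 0"
  shows "L t = mat 1"
proof -
  have "(\<lambda>g. \<rho> g *v v) ` carrier G \<subseteq> {x. L t *v x = x}"
  proof
    fix y assume "y \<in> (\<lambda>g. \<rho> g *v v) ` carrier G"
    then obtain g where g: "g \<in> carrier G" "y = \<rho> g *v v" by blast
    have "L t *v y = (L t ** \<rho> g) *v v" by (simp add: g matrix_vector_mul_assoc)
    also have "\<dots> = \<rho> g *v (L t *v v)" using L(1) t g by (simp add: matrix_vector_mul_assoc)
    finally show "y \<in> {x. L t *v x = x}" using L(2) t g by simp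
  qed
  moreover have "vec.subspace {x. L t *v x = x}"
    unfolding vec.subspace_def by (simp add: matrix_vector_right_distrib vec.scale)
  ultimately have "vec.span ((\<lambda>g. \<rho> g *v v) ` carrier G) \<subseteq> {x. L t *v x = x}"
    by (rule vec.span_minimal)
  then have "\<forall>x. L t *v x = mat 1 *v x" unfolding sp subset_iff by simp
  then show ?thesis by (subst matrix_eq) blast
qed

theorem proposition2p7:
  fixes G :: "('g, 'b) monoid_scheme"
    and \<rho> :: "'g \<Rightarrow> complex^'n^'n"
    and v :: "complex^'n"
    and k :: nat and n :: "nat \<Rightarrow> nat"
    and W :: "nat \<Rightarrow> nat \<Rightarrow> (complex^'n) set"
    and \<phi> :: "nat \<Rightarrow> nat \<Rightarrow> complex^'n \<Rightarrow> complex^'n"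
  assumes "representation G \<rho>"
    and "completely_reducible G \<rho>"
    and "isotypic_decomposition G \<rho> k n W \<phi>"
  shows "(vec.span ((\<lambda>g. \<rho> g *v v) ` carrier G) = UNIV
            \<longleftrightarrow> \<not> (\<exists>L. one_param_subgroup L
                     \<and> (\<forall>t. t \<noteq> 0 \<longrightarrow> (\<forall>g\<in>carrier G. L t ** \<rho> g = \<rho> g ** L t))
                     \<and> (\<exists>t. t \<noteq> 0 \<and> L t \<noteq> mat 1)
                     \<and> (\<forall>t. t \<noteq> 0 \<longrightarrow> L t *v v = v)))
       \<and> (\<not> (\<exists>L. one_param_subgroup L
                     \<and> (\<forall>t. t \<noteq> 0 \<longrightarrow> (\<forall>g\<in>carrier G. L t ** \<rho> g = \<rho> g ** L t))
                     \<and> (\<exists>t. t \<noteq> 0 \<and> L t \<noteq> mat 1)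
                     \<and> (\<forall>t. t \<noteq> 0 \<longrightarrow> L t *v v = v))
            \<longleftrightarrow> generic k n W \<phi> v)"
proof -
  interpret iso G \<rho> k n W \<phi> using assms(1,3) by unfold_locales
  let ?ex = "\<exists>L. one_param_subgroup L
                     \<and> (\<forall>t. t \<noteq> 0 \<longrightarrow> (\<forall>g\<in>carrier G. L t ** \<rho> g = \<rho> g ** L t))
                     \<and> (\<exists>t. t \<noteq> 0 \<and> L t \<noteq> mat 1)
                     \<and> (\<forall>t. t \<noteq> 0 \<longrightarrow> L t *v v = v)"
  have 1: "vec.span ((\<lambda>g. \<rho> g *v v) ` carrier G) = UNIV \<longleftrightarrow> \<not> ?ex"
  proof
    assume sp: "vec.span ((\<lambda>g. \<rho> g *v v) ` carrier G) = UNIV"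
    show "\<not> ?ex"
    proof
      assume ?ex
      then obtain L where LL: "one_param_subgroup L
                     \<and> (\<forall>t. t \<noteq> 0 \<longrightarrow> (\<forall>g\<in>carrier G. L t ** \<rho> g = \<rho> g ** L t))
                     \<and> (\<exists>t. t \<noteq> 0 \<and> L t \<noteq> mat 1)
                     \<and> (\<forall>t. t \<noteq> 0 \<longrightarrow> L t *v v = v)"
        by (erule exE)
      note L = LL[THEN conjunct2, THEN conjunct1] LL[THEN conjunct2, THEN conjunct2, THEN conjunct1]
        LL[THEN conjunct2, THEN conjunct2, THEN conjunct2]
      from L(2) obtain t where t: "t \<noteq> 0" "L t \<noteq> mat 1" by (elim exE conjE)
      have "L t = mat 1" by (rule no_L_if_span[OF sp L(1) L(3) t(1)])
      with t(2) show False by (rule notE)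
    qed
  next
    assume nex: "\<not> ?ex"
    show "vec.span ((\<lambda>g. \<rho> g *v v) ` carrier G) = UNIV"
    proof (rule ccontr)
      assume "vec.span ((\<lambda>g. \<rho> g *v v) ` carrier G) \<noteq> UNIV"
      from D_from_complement[OF assms(1,2) this]
      obtain D where D: "D ** D = D" "\<forall>g\<in>carrier G. D ** \<rho> g = \<rho> g ** D" "D *v v = 0" "D \<noteq> 0"
        by (elim exE conjE)
      have ?ex by (rule L_exists[OF D])
      with nex show False by (rule notE)
    qed
  qed
  have 2: "\<not> ?ex \<longleftrightarrow> generic k n W \<phi> v"
  proof
    assume nex: "\<not> ?ex"
    show "generic k n W \<phi> v"
    proof (rule ccontr)
      assume "\<not> generic k n W \<phi> v"
      from D_from_nongeneric[OF this]
      obtain D where D: "D ** D = D" "\<forall>g\<in>carrier G. D ** \<rho> g = \<rho> g ** D" "D *v v = 0" "D \<noteq> 0"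
        by (elim exE conjE)
      have ?ex by (rule L_exists[OF D])
      with nex show False by (rule notE)
    qed
  next
    assume gen: "generic k n W \<phi> v"
    show "\<not> ?ex"
    proof
      assume ?ex
      then obtain L where LL: "one_param_subgroup L
                     \<and> (\<forall>t. t \<noteq> 0 \<longrightarrow> (\<forall>g\<in>carrier G. L t ** \<rho> g = \<rho> g ** L t))
                     \<and> (\<exists>t. t \<noteq> 0 \<and> L t \<noteq> mat 1)
                     \<and> (\<forall>t. t \<noteq> 0 \<longrightarrow> L t *v v = v)"
        by (erule exE)
      note L = LL[THEN conjunct2, THEN conjunct1] LL[THEN conjunct2, THEN conjunct2, THEN conjunct1]
        LL[THEN conjunct2, THEN conjunct2, THEN conjunct2]
      from L(2) obtain t where t: "t \<noteq> 0" "L t \<noteq> mat 1" by (elim exE conjE)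
      define E where "E = L t - mat 1"
      have Ec: "\<forall>g\<in>carrier G. E ** \<rho> g = \<rho> g ** E"
      proof
        fix g assume g: "g \<in> carrier G"
        have c: "L t ** \<rho> g = \<rho> g ** L t" using L(1) t(1) g by blast
        show "E ** \<rho> g = \<rho> g ** E"
        proof (subst matrix_eq, rule allI)
          fix x
          have "L t *v (\<rho> g *v x) = \<rho> g *v (L t *v x)"
            by (simp add: matrix_vector_mul_assoc c)
          then show "(E ** \<rho> g) *v x = (\<rho> g ** E) *v x"
            unfolding E_def by (simp add: matrix_vector_mul_assoc[symmetric] matrix_vector_mult_diff_rdistrib matrix_vector_mult_diff_distrib)
        qed
      qed
      have Ev: "E *v v = 0" using L(3) t(1) by (simp add: E_def matrix_vector_mult_diff_rdistrib)
      have "E = 0" by (rule E_zero[OF Ec Ev gen])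
      then show False using t(2) by (simp add: E_def)
    qed
  qed
  show ?thesis by (rule conjI[OF 1 2])
qed


end
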